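(* Let $P$ and $Q$ be finite $(3+1)$-free posets with the same skeleton. Suppose $P$ and $Q$ have compatible listings $(X_1,\dots,X_m)$ and $(Y_1,\dots,Y_m)$ that yield the same word $w\in\Sigma^*$, and that for each $i$, if $X_i$ (equivalently $Y_i$) is a clone set then $|X_i|=|Y_i|$, and if $X_i$ is a tangle then $X_i$ and $Y_i$ are isomorphic as induced subposets. Then $P\cong Q$. In other words, a $(3+1)$-free poset is determined up to isomorphism by its skeleton together with, for each letter of the skeleton, the cardinality of the corresponding clone set or the isomorphism class of the corresponding tangle.
   Context: A poset $P$ is $(3+1)$-free if there are no $a,b,c,d\in P$ with $a<b<c$ and $d$ incomparable to each of $a,b,c$. For $a\in P$ let $D_a=\{x\in P:x<a\}$, $U_a=\{x\in P:x>a\}$. Write $a\mathrel{\top}b$ if neither of $D_a,D_b$ contains the other, $a\mathrel{\bot}b$ if neither of $U_a,U_b$ contains the other, and $a\approx b$ if $D_a=D_b$ and $U_a=U_b$. A top of a tangle is a subset $A\subseteq P$ with $|A|\ge2$ that is a connected component of the graph on $P$ with edges $\{a,b\}$ for $a\mathrel{\top}b$; a bottom of a tangle is defined likewise using $\bot$. A top $A$ and bottom $B$ are matched if there are distinct $a_1,a_2\in A$, $b_1,b_2\in B$ with $b_1<a_1$, $b_2<a_2$ and the pairs $\{a_1,a_2\},\{b_1,b_2\},\{b_1,a_2\},\{b_2,a_1\}$ incomparable; in a $(3+1)$-free poset this is a perfect matching. A tangle is a matched pair $(A,B)$, identified with $A\cup B$ and its induced subposet; a clone set is an equivalence class of $\approx$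 on the vertices in no tangle; clone sets and tangles are the parts of $P$. Levels: $L_1$ = minimal elements of $P$, $L_{k+1}$ = minimal elements of $P\setminus(L_1\cup\dots\cup L_k)$, and $\ell(a)=k$ if $a\in L_k$; each clone set lies in a single level and each tangle lies in $L_i\cup L_{i+1}$ for some $i$. A compatible listing is an ordering $(X_1,\dots,X_m)$ of all parts such that for $a\in X_i$, $b\in X_j$, $i\ne j$: $a<b$ iff $\ell(a)\le\ell(b)-2$, or $\ell(a)=\ell(b)-1$ and $i<j$ (compatible listings exist). Let $\Sigma=\{c_1,c_2,\dots\}\cup\{t_{12},t_{23},\dots,t_{i\,i+1},\dots\}$, $\Sigma^*$ the free monoid on $\Sigma$, and $M$ the quotient of $\Sigma^*$ by the commutation relations $c_ic_j=c_jc_i$ if $|i-j|\ge2$; $c_it_{j\,j+1}=t_{j\,j+1}c_i$ if $i\le j-2$ or $i\ge j+3$; $t_{i\,i+1}t_{j\,j+1}=t_{j\,j+1}t_{i\,i+1}$ if $|i-j|\ge3$. The word of a compatible listing replaces each clone set at level $i$ by $c_i$ and each tangle in levels $\{i,i+1\}$ by $t_{i\,i+1}$; the words of all compatible listings of $P$ have the same image in $M$, called the skeleton of $P$. *)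

theory Defs
  imports Main
begin

definition strict_poset :: "'a set \<Rightarrow> ('a \<Rightarrow> 'a \<Rightarrow> bool) \<Rightarrow> bool" where
  "strict_poset S lt \<longleftrightarrow> (\<forall>x\<in>S. \<not> lt x x) \<and>
     (\<forall>x\<in>S. \<forall>y\<in>S. \<forall>z\<in>S. lt x y \<longrightarrow> lt y z \<longrightarrow> lt x z)"

definition incomp :: "('a \<Rightarrow> 'a \<Rightarrow> bool) \<Rightarrow> 'a \<Rightarrow> 'a \<Rightarrow> bool" where
  "incomp lt x y \<longleftrightarrow> \<not> lt x y \<and> \<not> lt y x"

definition free_3_1 :: "'a set \<Rightarrow> ('a \<Rightarrow> 'a \<Rightarrow> bool) \<Rightarrow> bool" where
  "free_3_1 S lt \<longleftrightarrow> \<not> (\<exists>a\<in>S. \<exists>b\<in>S. \<exists>c\<in>S. \<exists>d\<in>S. lt a b \<and> lt b c \<and>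
       incomp lt d a \<and> incomp lt d b \<and> incomp lt d c)"

definition downset :: "'a set \<Rightarrow> ('a \<Rightarrow> 'a \<Rightarrow> bool) \<Rightarrow> 'a \<Rightarrow> 'a set" where
  "downset S lt a = {x\<in>S. lt x a}"

definition upset :: "'a set \<Rightarrow> ('a \<Rightarrow> 'a \<Rightarrow> bool) \<Rightarrow> 'a \<Rightarrow> 'a set" where
  "upset S lt a = {x\<in>S. lt a x}"

definition top_rel :: "'a set \<Rightarrow> ('a \<Rightarrow> 'a \<Rightarrow> bool) \<Rightarrow> 'a \<Rightarrow> 'a \<Rightarrow> bool" where
  "top_rel S lt a b \<longleftrightarrow> a \<in> S \<and> b \<in> S \<and>
     \<not> downset S lt a \<subseteq> downset S lt b \<and> \<not> downset S lt b \<subseteq> downset S lt a"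

definition bot_rel :: "'a set \<Rightarrow> ('a \<Rightarrow> 'a \<Rightarrow> bool) \<Rightarrow> 'a \<Rightarrow> 'a \<Rightarrow> bool" where
  "bot_rel S lt a b \<longleftrightarrow> a \<in> S \<and> b \<in> S \<and>
     \<not> upset S lt a \<subseteq> upset S lt b \<and> \<not> upset S lt b \<subseteq> upset S lt a"

definition clone_eq :: "'a set \<Rightarrow> ('a \<Rightarrow> 'a \<Rightarrow> bool) \<Rightarrow> 'a \<Rightarrow> 'a \<Rightarrow> bool" where
  "clone_eq S lt a b \<longleftrightarrow> downset S lt a = downset S lt b \<and> upset S lt a = upset S lt b"

definition component :: "'a set \<Rightarrow> ('a \<Rightarrow> 'a \<Rightarrow> bool) \<Rightarrow> 'a \<Rightarrow> 'a set" where
  "component S R a = {b\<in>S. R\<^sup>*\<^sup>* a b}"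

definition is_top :: "'a set \<Rightarrow> ('a \<Rightarrow> 'a \<Rightarrow> bool) \<Rightarrow> 'a set \<Rightarrow> bool" where
  "is_top S lt A \<longleftrightarrow> 2 \<le> card A \<and> (\<exists>a\<in>S. A = component S (top_rel S lt) a)"

definition is_bottom :: "'a set \<Rightarrow> ('a \<Rightarrow> 'a \<Rightarrow> bool) \<Rightarrow> 'a set \<Rightarrow> bool" where
  "is_bottom S lt B \<longleftrightarrow> 2 \<le> card B \<and> (\<exists>b\<in>S. B = component S (bot_rel S lt) b)"

definition matched :: "('a \<Rightarrow> 'a \<Rightarrow> bool) \<Rightarrow> 'a set \<Rightarrow> 'a set \<Rightarrow> bool" where
  "matched lt A B \<longleftrightarrow> (\<exists>a1\<in>A. \<exists>a2\<in>A. \<exists>b1\<in>B. \<exists>b2\<in>B. a1 \<noteq> a2 \<and> b1 \<noteq> b2 \<and>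
      lt b1 a1 \<and> lt b2 a2 \<and> incomp lt a1 a2 \<and> incomp lt b1 b2 \<and>
      incomp lt b1 a2 \<and> incomp lt b2 a1)"

definition tangle :: "'a set \<Rightarrow> ('a \<Rightarrow> 'a \<Rightarrow> bool) \<Rightarrow> 'a set \<Rightarrow> 'a set \<Rightarrow> bool" where
  "tangle S lt A B \<longleftrightarrow> is_top S lt A \<and> is_bottom S lt B \<and> matched lt A B"

definition is_tangle :: "'a set \<Rightarrow> ('a \<Rightarrow> 'a \<Rightarrow> bool) \<Rightarrow> 'a set \<Rightarrow> bool" where
  "is_tangle S lt X \<longleftrightarrow> (\<exists>A B. tangle S lt A B \<and> X = A \<union> B)"

definition in_tangle :: "'a set \<Rightarrow> ('a \<Rightarrow> 'a \<Rightarrow> bool) \<Rightarrow> 'a \<Rightarrow> bool" where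
  "in_tangle S lt x \<longleftrightarrow> (\<exists>X. is_tangle S lt X \<and> x \<in> X)"

definition is_clone_set :: "'a set \<Rightarrow> ('a \<Rightarrow> 'a \<Rightarrow> bool) \<Rightarrow> 'a set \<Rightarrow> bool" where
  "is_clone_set S lt X \<longleftrightarrow> (\<exists>x\<in>S. \<not> in_tangle S lt x \<and>
      X = {y\<in>S. \<not> in_tangle S lt y \<and> clone_eq S lt x y})"

definition parts :: "'a set \<Rightarrow> ('a \<Rightarrow> 'a \<Rightarrow> bool) \<Rightarrow> 'a set set" where
  "parts S lt = {X. is_clone_set S lt X} \<union> {X. is_tangle S lt X}"

text \<open>Levels: below_levels k = L_1 \<union> ... \<union> L_k, where L_{k+1} is the set of minimal
  elements of S minus (L_1 \<union> ... \<union> L_k).\<close>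
definition minimals :: "('a \<Rightarrow> 'a \<Rightarrow> bool) \<Rightarrow> 'a set \<Rightarrow> 'a set" where
  "minimals lt T = {x\<in>T. \<not> (\<exists>y\<in>T. lt y x)}"

fun below_levels :: "'a set \<Rightarrow> ('a \<Rightarrow> 'a \<Rightarrow> bool) \<Rightarrow> nat \<Rightarrow> 'a set" where
  "below_levels S lt 0 = {}"
| "below_levels S lt (Suc k) = below_levels S lt k \<union> minimals lt (S - below_levels S lt k)"

definition level_set :: "'a set \<Rightarrow> ('a \<Rightarrow> 'a \<Rightarrow> bool) \<Rightarrow> nat \<Rightarrow> 'a set" where
  "level_set S lt k = minimals lt (S - below_levels S lt (k - 1))"

definition level :: "'a set \<Rightarrow> ('a \<Rightarrow> 'a \<Rightarrow> bool) \<Rightarrow> 'a \<Rightarrow> nat" where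
  "level S lt a = (LEAST k. 1 \<le> k \<and> a \<in> level_set S lt k)"

definition compatible_listing :: "'a set \<Rightarrow> ('a \<Rightarrow> 'a \<Rightarrow> bool) \<Rightarrow> 'a set list \<Rightarrow> bool" where
  "compatible_listing S lt Xs \<longleftrightarrow> distinct Xs \<and> set Xs = parts S lt \<and>
     (\<forall>i<length Xs. \<forall>j<length Xs. i \<noteq> j \<longrightarrow> (\<forall>a\<in>Xs!i. \<forall>b\<in>Xs!j.
        lt a b \<longleftrightarrow> (level S lt a + 2 \<le> level S lt b \<or>
                     (level S lt a + 1 = level S lt b \<and> i < j))))"

text \<open>Alphabet: C i stands for c_i, T i stands for t_{i,i+1}.\<close>
datatype letter = C nat | T nat

definition letter_of :: "'a set \<Rightarrow> ('a \<Rightarrow> 'a \<Rightarrow> bool) \<Rightarrow> 'a set \<Rightarrow> letter" where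
  "letter_of S lt X = (if is_tangle S lt X then T (Min (level S lt ` X))
                       else C (Min (level S lt ` X)))"

definition word :: "'a set \<Rightarrow> ('a \<Rightarrow> 'a \<Rightarrow> bool) \<Rightarrow> 'a set list \<Rightarrow> letter list" where
  "word S lt Xs = map (letter_of S lt) Xs"

fun commute :: "letter \<Rightarrow> letter \<Rightarrow> bool" where
  "commute (C i) (C j) \<longleftrightarrow> 2 \<le> max i j - min i j"
| "commute (C i) (T j) \<longleftrightarrow> i + 2 \<le> j \<or> j + 3 \<le> i"
| "commute (T j) (C i) \<longleftrightarrow> i + 2 \<le> j \<or> j + 3 \<le> i"
| "commute (T i) (T j) \<longleftrightarrow> 3 \<le> max i j - min i j"

definition swap_step :: "letter list \<Rightarrow> letter list \<Rightarrow> bool" where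
  "swap_step u v \<longleftrightarrow> (\<exists>p q x y. commute x y \<and> u = p @ [x, y] @ q \<and> v = p @ [y, x] @ q)"

text \<open>Equality in the partially commutative monoid M.\<close>
definition trace_eq :: "letter list \<Rightarrow> letter list \<Rightarrow> bool" where
  "trace_eq u v \<longleftrightarrow> swap_step\<^sup>*\<^sup>* u v"

text \<open>The skeleton: the element of M (as a class of words) given by compatible listings.\<close>
definition skeleton :: "'a set \<Rightarrow> ('a \<Rightarrow> 'a \<Rightarrow> bool) \<Rightarrow> letter list set" where
  "skeleton S lt = {w. \<exists>Xs. compatible_listing S lt Xs \<and> trace_eq (word S lt Xs) w}"

definition order_iso :: "'a set \<Rightarrow> ('a \<Rightarrow> 'a \<Rightarrow> bool) \<Rightarrow> 'b set \<Rightarrow> ('b \<Rightarrow> 'b \<Rightarrow> bool) \<Rightarrow> bool" where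
  "order_iso X lt Y lt' \<longleftrightarrow> (\<exists>f. bij_betw f X Y \<and> (\<forall>x\<in>X. \<forall>y\<in>X. lt x y \<longleftrightarrow> lt' (f x) (f y)))"

end

theory Submission
  imports Defs
begin



locale fp =
  fixes S :: "'a set" and lt :: "'a \<Rightarrow> 'a \<Rightarrow> bool"
  assumes fin: "finite S" and sp: "strict_poset S lt" and fr: "free_3_1 S lt"
begin

abbreviation "lv \<equiv> level S lt"
abbreviation "BL \<equiv> below_levels S lt"

lemma irr: "x \<in> S \<Longrightarrow> \<not> lt x x" using sp unfolding strict_poset_def by blast
lemma tr: "x \<in> S \<Longrightarrow> y \<in> S \<Longrightarrow> z \<in> S \<Longrightarrow> lt x y \<Longrightarrow> lt y z \<Longrightarrow> lt x z"
  using sp unfolding strict_poset_def by blast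

lemma no31: "a \<in> S \<Longrightarrow> b \<in> S \<Longrightarrow> c \<in> S \<Longrightarrow> d \<in> S \<Longrightarrow> lt a b \<Longrightarrow> lt b c \<Longrightarrow>
   \<not> lt d a \<Longrightarrow> \<not> lt a d \<Longrightarrow> \<not> lt d b \<Longrightarrow> \<not> lt b d \<Longrightarrow> \<not> lt d c \<Longrightarrow> \<not> lt c d \<Longrightarrow> False"
  using fr unfolding free_3_1_def incomp_def by blast

lemma BL_sub: "BL k \<subseteq> S"
  by (induction k) (auto simp: minimals_def)

lemma BL_down: "a \<in> BL k \<Longrightarrow> b \<in> S \<Longrightarrow> lt b a \<Longrightarrow> b \<in> BL k"
proof (induction k arbitrary: a)
  case 0 then show ?case by simp
next
  case (Suc k) then show ?case by (auto simp: minimals_def)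
qed

lemma BL_Suc': "BL (Suc k) = {a\<in>S. downset S lt a \<subseteq> BL k}"
  using BL_sub[of k] BL_down[of _ k] by (auto simp: minimals_def downset_def)

lemma BL_mono: "k \<le> m \<Longrightarrow> BL k \<subseteq> BL m"
  by (induction m) (auto simp: le_Suc_eq)

lemma fin_BL: "finite F \<Longrightarrow> (\<forall>b\<in>F. \<exists>k. b \<in> BL k) \<Longrightarrow> \<exists>k. F \<subseteq> BL k"
proof (induction F rule: finite_induct)
  case empty then show ?case by auto
next
  case (insert x F)
  then obtain k1 k2 where "x \<in> BL k1" "F \<subseteq> BL k2" by auto
  then have "insert x F \<subseteq> BL (max k1 k2)" using BL_mono[of k1 "max k1 k2"] BL_mono[of k2 "max k1 k2"] by auto
  then show ?case by blast
qed

lemma down_fin: "finite (downset S lt a)" using fin by (simp add: downset_def)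

lemma BL_ex_aux: "\<forall>a\<in>S. card (downset S lt a) \<le> n \<longrightarrow> (\<exists>k. a \<in> BL k)"
proof (induction n)
  case 0
  show ?case
  proof (intro ballI impI)
    fix a assume "a \<in> S" "card (downset S lt a) \<le> 0"
    then have "downset S lt a = {}" using down_fin by auto
    then have "a \<in> BL (Suc 0)" using \<open>a\<in>S\<close> BL_Suc'[of 0] by blast
    then show "\<exists>k. a \<in> BL k" by blast
  qed
next
  case (Suc n)
  show ?case
  proof (intro ballI impI)
    fix a assume a: "a \<in> S" "card (downset S lt a) \<le> Suc n"
    have "\<forall>b\<in>downset S lt a. \<exists>k. b \<in> BL k"
    proof
      fix b assume b: "b \<in> downset S lt a"
      then have bS: "b \<in> S" "lt b a" by (auto simp: downset_def)
      have "downset S lt b \<subseteq> downset S lt a"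
      proof
        fix y assume "y \<in> downset S lt b"
        then have y: "y \<in> S" "lt y b" by (auto simp: downset_def)
        then have "lt y a" using tr[of y b a] bS a(1) by blast
        then show "y \<in> downset S lt a" using y(1) by (simp add: downset_def)
      qed
      moreover have "b \<notin> downset S lt b" using irr[OF bS(1)] by (simp add: downset_def)
      ultimately have "downset S lt b \<subset> downset S lt a" using b by blast
      then have "card (downset S lt b) < card (downset S lt a)" by (rule psubset_card_mono[OF down_fin])
      then have "card (downset S lt b) \<le> n" using a(2) by linarith
      then show "\<exists>k. b \<in> BL k" using Suc.IH bS by blast
    qed
    then obtain k where "downset S lt a \<subseteq> BL k" using fin_BL down_fin by blast
    then have "a \<in> BL (Suc k)" using a BL_Suc'[of k] by blast
    then show "\<exists>k. a \<in> BL k" by blast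
  qed
qed

lemma BL_ex: "a \<in> S \<Longrightarrow> \<exists>k. a \<in> BL k"
  using BL_ex_aux by blast

lemma lv_eq: assumes "a \<in> S" shows "lv a = (LEAST k. a \<in> BL k)"
proof -
  let ?m = "LEAST k. a \<in> BL k"
  have am: "a \<in> BL ?m" using BL_ex[OF assms] by (rule LeastI_ex)
  have "?m \<noteq> 0"
  proof
    assume "?m = 0" with am show False by simp
  qed
  then obtain j where j: "?m = Suc j" using not0_implies_Suc by blast
  have "a \<notin> BL j" using not_less_Least[of j "\<lambda>k. a \<in> BL k"] j by auto
  have lsS: "k \<ge> 1 \<Longrightarrow> a \<in> level_set S lt k \<longleftrightarrow> a \<in> BL k \<and> a \<notin> BL (k - 1)" for k
  proof -
    assume "k \<ge> 1" then obtain i where "k = Suc i" by (cases k) auto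
    then show ?thesis unfolding level_set_def by (auto simp: minimals_def)
  qed
  show ?thesis unfolding level_def
  proof (rule Least_equality)
    show "1 \<le> ?m \<and> a \<in> level_set S lt ?m" using lsS[of ?m] j am \<open>a \<notin> BL j\<close> by simp
  next
    fix y assume "1 \<le> y \<and> a \<in> level_set S lt y"
    then have "a \<in> BL y" using lsS by blast
    then show "?m \<le> y" by (rule Least_le)
  qed
qed

lemma lv_le: assumes "a \<in> S" shows "lv a \<le> k \<longleftrightarrow> a \<in> BL k"
proof -
  have am: "a \<in> BL (lv a)" using BL_ex[OF assms] LeastI_ex lv_eq[OF assms] by metis
  show ?thesis
  proof
    assume "lv a \<le> k" then show "a \<in> BL k" using am BL_mono by blast
  next
    assume "a \<in> BL k" then show "lv a \<le> k" using lv_eq[OF assms] Least_le by metis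
  qed
qed

lemma lv_pos: "a \<in> S \<Longrightarrow> lv a \<ge> 1"
  using lv_le[of a 0] by (cases "lv a") auto

lemma lv_lt: assumes "a \<in> S" "b \<in> S" "lt b a" shows "lv b < lv a"
proof -
  obtain j where j: "lv a = Suc j" using lv_pos[OF assms(1)] by (cases "lv a") auto
  have "a \<in> BL (Suc j)" using lv_le[OF assms(1), of "Suc j"] j by (simp del: below_levels.simps)
  then have "b \<in> BL j" using assms BL_Suc' by (auto simp: downset_def)
  then show ?thesis using lv_le[OF assms(2), of j] j by (simp del: below_levels.simps)
qed

lemma lv_pred: assumes "a \<in> S" "lv a \<ge> 2" shows "\<exists>c\<in>S. lt c a \<and> lv c = lv a - 1"
proof -
  obtain j where j: "lv a = Suc (Suc j)" using assms(2) by (cases "lv a"; cases "lv a - 1") auto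
  have "a \<notin> BL (Suc j)" using lv_le[OF assms(1), of "Suc j"] j by (simp del: below_levels.simps)
  then have "\<not> downset S lt a \<subseteq> BL j" using assms(1) BL_Suc'[of j] by blast
  then obtain c where c: "c \<in> S" "lt c a" "c \<notin> BL j" by (auto simp: downset_def)
  have "lv c > j" using lv_le[OF c(1), of j] c by (simp del: below_levels.simps)
  moreover have "lv c < lv a" using lv_lt assms c by auto
  ultimately show ?thesis using c j by auto
qed

lemma lv_down: assumes "a \<in> S" "b \<in> S" "downset S lt a = downset S lt b" shows "lv a = lv b"
proof -
  have e: "a \<in> BL k \<longleftrightarrow> b \<in> BL k" for k
  proof (cases k)
    case 0 then show ?thesis by simp
  next
    case (Suc j) then show ?thesis using assms by (simp only: BL_Suc' mem_Collect_eq)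
  qed
  have 1: "lv a \<le> lv b" using lv_le[OF assms(1), of "lv b"] lv_le[OF assms(2), of "lv b"] e[of "lv b"] by blast
  have 2: "lv b \<le> lv a" using lv_le[OF assms(1), of "lv a"] lv_le[OF assms(2), of "lv a"] e[of "lv a"] by blast
  from 1 2 show ?thesis by simp
qed

end



lemma rtc_sym: assumes s: "\<And>x y. R x y \<Longrightarrow> R y x" and h: "R\<^sup>*\<^sup>* x y" shows "R\<^sup>*\<^sup>* y x"
  using h
proof (induction rule: rtranclp_induct)
  case base then show ?case by simp
next
  case (step y z) then show ?case by (meson s converse_rtranclp_into_rtranclp)
qed

lemma comp_same: assumes "\<And>x y. R x y \<Longrightarrow> R y x" "z \<in> component S R a0"
  shows "component S R a0 = component S R z"
proof -
  have "R\<^sup>*\<^sup>* a0 z" using assms(2) by (simp add: component_def)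
  moreover have "R\<^sup>*\<^sup>* z a0" using rtc_sym[OF assms(1) calculation] by blast
  ultimately show ?thesis unfolding component_def by (meson rtranclp_trans)
qed

lemma comp_nb: assumes "\<And>x y. R x y \<Longrightarrow> R y x" "z \<in> component S R a0" "2 \<le> card (component S R a0)"
  shows "\<exists>u. R z u"
proof -
  have "\<not> component S R a0 \<subseteq> {z}"
  proof
    assume "component S R a0 \<subseteq> {z}"
    then have "card (component S R a0) \<le> card {z}" using card_mono[of "{z}"] by simp
    then show False using assms(3) by simp
  qed
  then obtain w where w: "w \<in> component S R a0" "w \<noteq> z" by blast
  then have "w \<in> component S R z" using comp_same[OF assms(1,2)] by simp
  then have "R\<^sup>*\<^sup>* z w" by (simp add: component_def)
  then show ?thesis using w(2) by (metis converse_rtranclpE)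
qed

lemma comp_inv: assumes "\<And>x y. R x y \<Longrightarrow> f x = f y" "R\<^sup>*\<^sup>* a b" shows "f a = f b"
  using assms(2) by (induction rule: rtranclp_induct) (auto dest: assms(1))

lemma top_sym: "top_rel S lt x y \<Longrightarrow> top_rel S lt y x" by (auto simp: top_rel_def)
lemma bot_sym: "bot_rel S lt x y \<Longrightarrow> bot_rel S lt y x" by (auto simp: bot_rel_def)

context fp begin

lemma lvA: assumes S: "a \<in> S" "b \<in> S" "x \<in> S" and h: "lt x a" "\<not> lt x b" shows "lv b \<le> lv a"
proof (rule ccontr)
  assume "\<not> lv b \<le> lv a"
  then have ab: "lv a < lv b" by simp
  have "lv x < lv a" using lv_lt S h by blast
  moreover have "lv x \<ge> 1" using lv_pos S by blast
  ultimately have "lv b \<ge> 3" using ab by linarith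
  then obtain c where c: "c \<in> S" "lt c b" "lv c = lv b - 1" using lv_pred[of b] S by auto
  have "lv c \<ge> 2" using c \<open>lv b \<ge> 3\<close> by linarith
  then obtain d where d: "d \<in> S" "lt d c" "lv d = lv c - 1" using lv_pred[of c] c(1) by blast
  have nca: "\<not> lt c a" using lv_lt[of a c] S c ab by linarith
  have nac: "\<not> lt a c" using tr S c h by metis
  have nba: "\<not> lt b a" using lv_lt[of a b] S ab by linarith
  have nab: "\<not> lt a b" using tr S h by metis
  have nad: "\<not> lt a d" using tr S c d nac by metis
  have da: "lt d a"
  proof (rule ccontr)
    assume "\<not> lt d a"
    then show False using no31[of d c b a] S c d nad nca nac nba nab by blast
  qed
  have "lv d < lv a" using lv_lt S d da by blast
  then have eq: "lv a = lv c" using c d ab by linarith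
  have 1: "\<not> lt x c" using tr S c h by metis
  have 2: "\<not> lt c x" using tr S c h nca by metis
  have 3: "\<not> lt b x" using tr S h nba by metis
  have 4: "\<not> lt x d" using tr S c d h by metis
  have 5: "\<not> lt d x"
  proof
    assume "lt d x"
    then have "lv d < lv x" using lv_lt S d by blast
    moreover have "lv x < lv a" using lv_lt S h by blast
    ultimately show False using eq d c ab by linarith
  qed
  show False using no31[of d c b x] S c d h 1 2 3 4 5 by blast
qed

lemma lvB: assumes S: "a \<in> S" "b \<in> S" "x \<in> S" and h: "lt a x" "\<not> lt b x" shows "lv a \<le> lv b"
proof (rule ccontr)
  assume "\<not> lv a \<le> lv b"
  then have ab: "lv b < lv a" by simp
  then have "lv a \<ge> 2" using lv_pos[of b] S by linarith
  then obtain c where c: "c \<in> S" "lt c a" "lv c = lv a - 1" using lv_pred[of a] S by auto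
  have 1: "\<not> lt c b" using lv_lt[of b c] S c ab by linarith
  have 2: "\<not> lt b c" using tr S c h by metis
  have 3: "\<not> lt b a" using tr S h by metis
  have 4: "\<not> lt a b" using lv_lt[of b a] S ab by linarith
  have "lv a < lv x" using lv_lt S h by blast
  then have 5: "\<not> lt x b" using lv_lt[of b x] S ab by linarith
  show False using no31[of c a x b] S c h 1 2 3 4 5 by blast
qed

lemma top_lv: "top_rel S lt a b \<Longrightarrow> lv a = lv b"
proof -
  assume t: "top_rel S lt a b"
  then have S: "a \<in> S" "b \<in> S" by (auto simp: top_rel_def)
  from t obtain x where "x \<in> S" "lt x a" "\<not> lt x b" by (auto simp: top_rel_def downset_def)
  then have 1: "lv b \<le> lv a" using lvA S by blast
  from t obtain y where "y \<in> S" "lt y b" "\<not> lt y a" by (auto simp: top_rel_def downset_def)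
  then have 2: "lv a \<le> lv b" using lvA S by blast
  from 1 2 show ?thesis by simp
qed

lemma bot_lv: "bot_rel S lt a b \<Longrightarrow> lv a = lv b"
proof -
  assume t: "bot_rel S lt a b"
  then have S: "a \<in> S" "b \<in> S" by (auto simp: bot_rel_def)
  from t obtain x where "x \<in> S" "lt a x" "\<not> lt b x" by (auto simp: bot_rel_def upset_def)
  then have 1: "lv a \<le> lv b" using lvB S by blast
  from t obtain y where "y \<in> S" "lt b y" "\<not> lt a y" by (auto simp: bot_rel_def upset_def)
  then have 2: "lv b \<le> lv a" using lvB S by blast
  from 1 2 show ?thesis by simp
qed

lemma eqlv: "x \<in> S \<Longrightarrow> y \<in> S \<Longrightarrow> lv x = lv y \<Longrightarrow> \<not> lt x y"
  using lv_lt by fastforce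

lemma topbot: assumes t: "top_rel S lt z u" and b: "bot_rel S lt z v" shows False
proof -
  have S: "z \<in> S" "u \<in> S" "v \<in> S" using t b by (auto simp: top_rel_def bot_rel_def)
  have l: "lv z = lv u" "lv z = lv v" using top_lv[OF t] bot_lv[OF b] by auto
  from t obtain p where p: "p \<in> S" "lt p z" "\<not> lt p u" by (auto simp: top_rel_def downset_def)
  from t obtain q where q: "q \<in> S" "lt q u" "\<not> lt q z" by (auto simp: top_rel_def downset_def)
  from b obtain r where r: "r \<in> S" "lt z r" "\<not> lt v r" by (auto simp: bot_rel_def upset_def)
  from b obtain s where s: "s \<in> S" "lt v s" "\<not> lt z s" by (auto simp: bot_rel_def upset_def)
  have zu: "\<not> lt z u" "\<not> lt u z" "\<not> lt z v" "\<not> lt v z" "\<not> lt u v" "\<not> lt v u"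
    using eqlv S l by auto
  have lr: "lv z < lv r" using lv_lt S r by blast
  have ls: "lv v < lv s" using lv_lt S s by blast
  have ur: "lt u r"
  proof (rule ccontr)
    assume nur: "\<not> lt u r"
    have "\<not> lt u p" using tr S p zu by metis
    moreover have "\<not> lt r u" using lv_lt[of u r] S r lr l by linarith
    ultimately show False using no31[of p z r u] S p r zu nur by blast
  qed
  have qv: "lt q v"
  proof (rule ccontr)
    assume nqv: "\<not> lt q v"
    have "\<not> lt v q" using tr S q zu by metis
    moreover have "\<not> lt r v" using lv_lt[of v r] S r lr l by linarith
    ultimately show False using no31[of q u r v] S q r ur zu nqv by blast
  qed
  have "\<not> lt z q" using tr S q zu by metis
  moreover have "\<not> lt s z" using lv_lt[of z s] S s ls l by linarith
  ultimately show False using no31[of q v s z] S q s qv zu by blast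
qed

lemma comp_sub: "component S R a \<subseteq> S" by (auto simp: component_def)

lemma tangle_struct: assumes "tangle S lt A B"
  shows "A \<subseteq> S \<and> B \<subseteq> S \<and> B \<noteq> {} \<and> A \<noteq> {} \<and> (\<exists>\<beta>. (\<forall>b\<in>B. lv b = \<beta>) \<and> (\<forall>a\<in>A. lv a = Suc \<beta>)) \<and>
         (\<forall>a\<in>A. \<exists>b\<in>B. lt b a) \<and> (\<forall>z\<in>A. \<exists>u. top_rel S lt z u) \<and> (\<forall>z\<in>B. \<exists>u. bot_rel S lt z u) \<and>
         (\<forall>z\<in>A. A = component S (top_rel S lt) z) \<and> (\<forall>z\<in>B. B = component S (bot_rel S lt) z)"
proof -
  from assms obtain a0 b0 where a0: "a0 \<in> S" "A = component S (top_rel S lt) a0" "2 \<le> card A"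
    and b0: "b0 \<in> S" "B = component S (bot_rel S lt) b0" "2 \<le> card B" and m: "matched lt A B"
    unfolding tangle_def is_top_def is_bottom_def by blast
  from m obtain a1 a2 b1 b2 where ab: "a1 \<in> A" "a2 \<in> A" "b1 \<in> B" "b2 \<in> B" "lt b1 a1" "lt b2 a2"
     "incomp lt b2 a1" unfolding matched_def by blast
  have AS: "A \<subseteq> S" "B \<subseteq> S" using a0 b0 comp_sub by auto
  have Ane: "A \<noteq> {}" "B \<noteq> {}" using ab by auto
  have Acomp: "\<forall>z\<in>A. A = component S (top_rel S lt) z" using comp_same[of "top_rel S lt", OF top_sym] a0(2) by blast
  have Bcomp: "\<forall>z\<in>B. B = component S (bot_rel S lt) z" using comp_same[of "bot_rel S lt", OF bot_sym] b0(2) by blast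
  have Anb: "\<forall>z\<in>A. \<exists>u. top_rel S lt z u" using comp_nb[of "top_rel S lt", OF top_sym] a0(2,3) by blast
  have Bnb: "\<forall>z\<in>B. \<exists>u. bot_rel S lt z u" using comp_nb[of "bot_rel S lt", OF bot_sym] b0(2,3) by blast
  have Alv: "\<forall>a\<in>A. lv a = lv a1"
  proof
    fix a assume "a \<in> A"
    then have "(top_rel S lt)\<^sup>*\<^sup>* a1 a" using Acomp ab by (auto simp: component_def)
    then have "lv a1 = lv a" by (induction rule: rtranclp_induct) (auto dest: top_lv)
    then show "lv a = lv a1" by simp
  qed
  have Blv: "\<forall>b\<in>B. lv b = lv b1"
  proof
    fix b assume "b \<in> B"
    then have "(bot_rel S lt)\<^sup>*\<^sup>* b1 b" using Bcomp ab by (auto simp: component_def)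
    then have "lv b1 = lv b" by (induction rule: rtranclp_induct) (auto dest: bot_lv)
    then show "lv b = lv b1" by simp
  qed
  have S1: "a1 \<in> S" "b1 \<in> S" "b2 \<in> S" using ab AS by auto
  have lt1: "lv b1 < lv a1" using lv_lt S1 ab by blast
  have lb2: "lv b2 = lv b1" using Blv ab by blast
  have suc: "lv a1 = Suc (lv b1)"
  proof (rule ccontr)
    assume "lv a1 \<noteq> Suc (lv b1)"
    then have big: "lv a1 \<ge> lv b1 + 2" using lt1 by linarith
    moreover have "lv b1 \<ge> 1" using lv_pos S1 by blast
    ultimately obtain e1 where e1: "e1 \<in> S" "lt e1 a1" "lv e1 = lv a1 - 1" using lv_pred[of a1] S1 by auto
    have "lv e1 \<ge> 2" using e1 big \<open>lv b1 \<ge> 1\<close> by linarith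
    then obtain e2 where e2: "e2 \<in> S" "lt e2 e1" "lv e2 = lv e1 - 1" using lv_pred[of e1] e1(1) by blast
    have n: "\<not> lt b2 a1" "\<not> lt a1 b2" using ab(7) by (auto simp: incomp_def)
    have 1: "\<not> lt e2 b2" using lv_lt[of b2 e2] S1 e2 e1 big lb2 by linarith
    have 2: "\<not> lt e1 b2" using lv_lt[of b2 e1] S1 e1 big lb2 by linarith
    have 3: "\<not> lt b2 e1"
    proof
      assume "lt b2 e1" then have "lt b2 a1" using tr[of b2 e1 a1] S1 e1 by blast
      with n show False by blast
    qed
    have 4: "\<not> lt b2 e2"
    proof
      assume "lt b2 e2" then have "lt b2 e1" using tr[of b2 e2 e1] S1 e1 e2 by blast
      with 3 show False by blast
    qed
    show False using no31[of e2 e1 a1 b2] S1 e1 e2 n 1 2 3 4 by blast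
  qed
  have below: "\<forall>a\<in>A. \<exists>b\<in>B. lt b a"
  proof
    fix a assume "a \<in> A"
    then have "(top_rel S lt)\<^sup>*\<^sup>* a1 a" using Acomp ab by (auto simp: component_def)
    then show "\<exists>b\<in>B. lt b a"
    proof (induction rule: rtranclp_induct)
      case base then show ?case using ab by blast
    next
      case (step y z)
      from step.IH obtain b where b: "b \<in> B" "lt b y" by blast
      show ?case
      proof (cases "lt b z")
        case True then show ?thesis using b by blast
      next
        case False
        have yz: "y \<in> S" "z \<in> S" using step.hyps(2) by (auto simp: top_rel_def)
        from step.hyps(2) obtain x where x: "x \<in> S" "lt x z" "\<not> lt x y"
          by (auto simp: top_rel_def downset_def)
        have bS: "b \<in> S" using b AS by auto
        have "bot_rel S lt b x" unfolding bot_rel_def upset_def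
          using x yz bS b False by auto
        moreover have "(bot_rel S lt)\<^sup>*\<^sup>* b0 b" using b b0 by (simp add: component_def)
        ultimately have "(bot_rel S lt)\<^sup>*\<^sup>* b0 x" by (meson rtranclp.rtrancl_into_rtrancl)
        then have "x \<in> B" using b0(2) x(1) by (simp add: component_def)
        then show ?thesis using x by blast
      qed
    qed
  qed
  have ex: "\<exists>\<beta>. (\<forall>b\<in>B. lv b = \<beta>) \<and> (\<forall>a\<in>A. lv a = Suc \<beta>)"
    using Alv Blv suc by (intro exI[of _ "lv b1"]) simp
  show ?thesis using AS Ane Acomp Bcomp Anb Bnb below ex by (intro conjI)
qed

end



context fp begin

lemma tangle_part: assumes "is_tangle S lt X"
  shows "X \<subseteq> S \<and> (\<forall>a\<in>X. lv a = (if \<exists>y\<in>X. lt y a then Suc (Min (lv ` X)) else Min (lv ` X)))"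
proof -
  from assms obtain A B where t: "tangle S lt A B" "X = A \<union> B" unfolding is_tangle_def by blast
  note ts = tangle_struct[OF t(1)]
  then obtain \<beta> where bl: "\<forall>b\<in>B. lv b = \<beta>" "\<forall>a\<in>A. lv a = Suc \<beta>" by blast
  have XS: "X \<subseteq> S" using ts t by auto
  have fX: "finite X" using XS fin finite_subset by blast
  have mn: "Min (lv ` X) = \<beta>"
  proof (rule Min_eqI)
    show "finite (lv ` X)" using fX by simp
    show "y \<in> lv ` X \<Longrightarrow> \<beta> \<le> y" for y using bl t by auto
    obtain b where "b \<in> B" using ts by blast
    then show "\<beta> \<in> lv ` X" using bl t by force
  qed
  have "\<forall>a\<in>X. lv a = (if \<exists>y\<in>X. lt y a then Suc \<beta> else \<beta>)"
  proof
    fix a assume aX: "a \<in> X"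
    show "lv a = (if \<exists>y\<in>X. lt y a then Suc \<beta> else \<beta>)"
    proof (cases "a \<in> A")
      case True
      then obtain b where "b \<in> B" "lt b a" using ts by blast
      then show ?thesis using True bl t by auto
    next
      case False
      then have aB: "a \<in> B" using aX t by auto
      have "\<not> (\<exists>y\<in>X. lt y a)"
      proof
        assume "\<exists>y\<in>X. lt y a"
        then obtain y where y: "y \<in> X" "lt y a" by blast
        then have "lv y < lv a" using lv_lt XS aX by blast
        moreover have "lv y \<ge> \<beta>" using y bl t by auto
        ultimately show False using bl aB by auto
      qed
      then show ?thesis using bl aB by auto
    qed
  qed
  then show ?thesis using mn XS by simp
qed

lemma clone_part: assumes "is_clone_set S lt X"
  shows "X \<subseteq> S \<and> (\<forall>a\<in>X. lv a = Min (lv ` X)) \<and> (\<forall>a\<in>X. \<forall>b\<in>X. \<not> lt a b) \<and> (\<forall>a\<in>X. \<not> in_tangle S lt a)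
     \<and> (\<forall>z\<in>X. X = {y\<in>S. \<not> in_tangle S lt y \<and> clone_eq S lt z y})"
proof -
  from assms obtain x where x: "x \<in> S" "\<not> in_tangle S lt x" "X = {y\<in>S. \<not> in_tangle S lt y \<and> clone_eq S lt x y}"
    unfolding is_clone_set_def by blast
  have XS: "X \<subseteq> S" using x by auto
  have fX: "finite X" using XS fin finite_subset by blast
  have lvx: "\<forall>a\<in>X. lv a = lv x"
  proof
    fix a assume "a \<in> X"
    then have "a \<in> S" "downset S lt x = downset S lt a" using x(3) by (auto simp: clone_eq_def)
    then show "lv a = lv x" using lv_down[of x a] x(1) by simp
  qed
  have "clone_eq S lt x x" by (simp add: clone_eq_def)
  then have xX: "x \<in> X" using x by blast
  have mn: "Min (lv ` X) = lv x"
  proof (rule Min_eqI)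
    show "finite (lv ` X)" using fX by simp
    show "y \<in> lv ` X \<Longrightarrow> lv x \<le> y" for y using lvx by auto
    show "lv x \<in> lv ` X" using xX by blast
  qed
  have anti: "\<forall>a\<in>X. \<forall>b\<in>X. \<not> lt a b"
  proof (intro ballI notI)
    fix a b assume ab: "a \<in> X" "b \<in> X" "lt a b"
    then have "downset S lt a = downset S lt b" using x by (auto simp: clone_eq_def)
    moreover have "a \<in> downset S lt b" using ab XS by (auto simp: downset_def)
    ultimately have "lt a a" by (auto simp: downset_def)
    then show False using irr ab XS by auto
  qed
  have rep: "\<forall>z\<in>X. X = {y\<in>S. \<not> in_tangle S lt y \<and> clone_eq S lt z y}"
    using x by (auto simp: clone_eq_def)
  have l2: "\<forall>a\<in>X. lv a = Min (lv ` X)" using lvx mn by simp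
  have nt: "\<forall>a\<in>X. \<not> in_tangle S lt a" using x(3) by blast
  show ?thesis using XS l2 anti nt rep by (intro conjI)
qed

lemma parts_cases: "X \<in> parts S lt \<Longrightarrow> (is_clone_set S lt X \<and> \<not> is_tangle S lt X) \<or> (is_tangle S lt X \<and> \<not> is_clone_set S lt X)"
proof -
  assume "X \<in> parts S lt"
  moreover have "\<not> (is_clone_set S lt X \<and> is_tangle S lt X)"
  proof
    assume h: "is_clone_set S lt X \<and> is_tangle S lt X"
    then obtain x where x: "x \<in> S" "\<not> in_tangle S lt x" "X = {y\<in>S. \<not> in_tangle S lt y \<and> clone_eq S lt x y}"
      unfolding is_clone_set_def by blast
    have "clone_eq S lt x x" by (simp add: clone_eq_def)
    then have "x \<in> X" using x by blast
    then show False using h x(2) unfolding in_tangle_def by blast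
  qed
  ultimately show ?thesis unfolding parts_def by blast
qed

lemma parts_sub: assumes "X \<in> parts S lt" shows "X \<subseteq> S"
proof -
  have "is_clone_set S lt X \<or> is_tangle S lt X" using parts_cases[OF assms] by blast
  then show ?thesis
  proof
    assume "is_clone_set S lt X" then show ?thesis using clone_part by blast
  next
    assume "is_tangle S lt X" then show ?thesis using tangle_part by blast
  qed
qed

lemma parts_cover: "a \<in> S \<Longrightarrow> \<exists>X\<in>parts S lt. a \<in> X"
proof -
  assume a: "a \<in> S"
  show ?thesis
  proof (cases "in_tangle S lt a")
    case True
    then obtain X where X: "is_tangle S lt X" "a \<in> X" unfolding in_tangle_def by blast
    have "X \<in> parts S lt" unfolding parts_def using X(1) by (rule UnI2[OF CollectI])
    then show ?thesis using X(2) by (rule bexI[rotated])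
  next
    case False
    let ?X = "{y\<in>S. \<not> in_tangle S lt y \<and> clone_eq S lt a y}"
    have "is_clone_set S lt ?X" unfolding is_clone_set_def
    proof (rule bexI[of _ a])
      show "\<not> in_tangle S lt a \<and> ?X = ?X" using False by simp
    qed (rule a)
    then have X1: "?X \<in> parts S lt" unfolding parts_def by (rule UnI1[OF CollectI])
    have ce: "clone_eq S lt a a" by (simp add: clone_eq_def)
    have X2: "a \<in> ?X" using a False ce by (intro CollectI conjI)
    show ?thesis
    proof (rule bexI[where x="?X"])
      show "a \<in> ?X" by (rule X2)
      show "?X \<in> parts S lt" by (rule X1)
    qed
  qed
qed

lemma ts_A: "tangle S lt A B \<Longrightarrow> z \<in> A \<Longrightarrow> \<exists>u. top_rel S lt z u"
  using tangle_struct by blast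
lemma ts_B: "tangle S lt A B \<Longrightarrow> z \<in> B \<Longrightarrow> \<exists>u. bot_rel S lt z u"
  using tangle_struct by blast
lemma ts_Ac: "tangle S lt A B \<Longrightarrow> z \<in> A \<Longrightarrow> A = component S (top_rel S lt) z"
  using tangle_struct by blast
lemma ts_Bc: "tangle S lt A B \<Longrightarrow> z \<in> B \<Longrightarrow> B = component S (bot_rel S lt) z"
  using tangle_struct by blast
lemma ts_below: "tangle S lt A B \<Longrightarrow> z \<in> A \<Longrightarrow> \<exists>b\<in>B. lt b z"
  using tangle_struct by blast
lemma ts_ne: "tangle S lt A B \<Longrightarrow> A \<noteq> {}"
  using tangle_struct by blast
lemma ts_lv: "tangle S lt A B \<Longrightarrow> \<exists>\<beta>. (\<forall>b\<in>B. lv b = \<beta>) \<and> (\<forall>a\<in>A. lv a = Suc \<beta>)"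
  using tangle_struct by blast

lemma kc: assumes "compatible_listing S lt Xs" "i < length Xs" "j < length Xs" "i \<noteq> j"
  "p \<in> Xs!i" "q \<in> Xs!j" "lt q p" "lv q + 1 = lv p" shows "j < i"
proof -
  have "\<forall>i<length Xs. \<forall>j<length Xs. i \<noteq> j \<longrightarrow> (\<forall>a\<in>Xs!i. \<forall>b\<in>Xs!j.
        lt a b \<longleftrightarrow> (lv a + 2 \<le> lv b \<or> (lv a + 1 = lv b \<and> i < j)))"
    using assms(1) unfolding compatible_listing_def by blast
  then have "lt q p \<longleftrightarrow> (lv q + 2 \<le> lv p \<or> (lv q + 1 = lv p \<and> j < i))"
    using assms(2-6) by blast
  then show ?thesis using assms(7,8) by linarith
qed

lemma disj: assumes cl: "compatible_listing S lt Xs" and ij: "i < length Xs" "j < length Xs" "i \<noteq> j"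
  shows "Xs!i \<inter> Xs!j = {}"
proof (rule ccontr)
  assume "Xs!i \<inter> Xs!j \<noteq> {}"
  then obtain z where z: "z \<in> Xs!i" "z \<in> Xs!j" by blast
  have P: "Xs!i \<in> parts S lt" "Xs!j \<in> parts S lt" using cl ij unfolding compatible_listing_def by auto
  have ne: "Xs!i \<noteq> Xs!j" using cl ij nth_eq_iff_index_eq unfolding compatible_listing_def by blast
  have cl_cl: False if "is_clone_set S lt (Xs!k)" "is_clone_set S lt (Xs!l)" "z \<in> Xs!k" "z \<in> Xs!l" "Xs!k \<noteq> Xs!l" for k l
    using clone_part[OF that(1)] clone_part[OF that(2)] that(3-5) by metis
  have cl_t: False if "is_clone_set S lt (Xs!k)" "is_tangle S lt (Xs!l)" "z \<in> Xs!k" "z \<in> Xs!l" for k l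
    using clone_part[OF that(1)] that(2-4) unfolding in_tangle_def by blast
  show False
  proof (cases "is_clone_set S lt (Xs!i)")
    case ci: True
    show False
    proof (cases "is_clone_set S lt (Xs!j)")
      case True then show False using cl_cl ci z ne by blast
    next
      case False then have "is_tangle S lt (Xs!j)" using P parts_cases by blast
      then show False using cl_t ci z by blast
    qed
  next
    case False
    then have ti: "is_tangle S lt (Xs!i)" using P parts_cases by blast
    show False
    proof (cases "is_clone_set S lt (Xs!j)")
      case True then show False using cl_t ti z by blast
    next
      case False then have tj: "is_tangle S lt (Xs!j)" using P parts_cases by blast
      from ti obtain A B where t: "tangle S lt A B" "Xs!i = A \<union> B" unfolding is_tangle_def by blast
      from tj obtain A' B' where t': "tangle S lt A' B'" "Xs!j = A' \<union> B'" unfolding is_tangle_def by blast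
      obtain \<beta> where bl: "\<forall>b\<in>B. lv b = \<beta>" "\<forall>a\<in>A. lv a = Suc \<beta>" using ts_lv[OF t(1)] by blast
      obtain \<beta>' where bl': "\<forall>b\<in>B'. lv b = \<beta>'" "\<forall>a\<in>A'. lv a = Suc \<beta>'" using ts_lv[OF t'(1)] by blast
      have c1: "\<not> (z \<in> A \<and> z \<in> B')"
      proof
        assume "z \<in> A \<and> z \<in> B'"
        then obtain u v where "top_rel S lt z u" "bot_rel S lt z v" using ts_A[OF t(1)] ts_B[OF t'(1)] by blast
        then show False by (rule topbot)
      qed
      have c2: "\<not> (z \<in> B \<and> z \<in> A')"
      proof
        assume "z \<in> B \<and> z \<in> A'"
        then obtain u v where "top_rel S lt z u" "bot_rel S lt z v" using ts_A[OF t'(1)] ts_B[OF t(1)] by blast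
        then show False by (rule topbot)
      qed
      show False
      proof (cases "z \<in> A")
        case True
        then have zA': "z \<in> A'" using c1 z t t' by blast
        obtain b where b: "b \<in> B" "lt b z" using ts_below[OF t(1) True] by blast
        obtain b' where b': "b' \<in> B'" "lt b' z" using ts_below[OF t'(1) zA'] by blast
        have "j < i" using kc[OF cl ij, of z b'] z b' t' bl' zA' by auto
        moreover have "i < j" using kc[OF cl ij(2,1) _, of z b] ij z b t bl True by auto
        ultimately show False by simp
      next
        case False
        then have zB: "z \<in> B" using z t by blast
        then have zB': "z \<in> B'" using c2 z t' by blast
        have BB: "B = B'" using ts_Bc[OF t(1) zB] ts_Bc[OF t'(1) zB'] by simp
        obtain a1 where a1: "a1 \<in> A" using ts_ne[OF t(1)] by blast
        obtain b1 where b1: "b1 \<in> B" "lt b1 a1" using ts_below[OF t(1) a1] by blast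
        obtain a2 where a2: "a2 \<in> A'" using ts_ne[OF t'(1)] by blast
        obtain b2 where b2: "b2 \<in> B'" "lt b2 a2" using ts_below[OF t'(1) a2] by blast
        have "j < i" using kc[OF cl ij, of a1 b1] a1 b1 t t' bl BB by auto
        moreover have "i < j" using kc[OF cl ij(2,1) _, of a2 b2] ij a2 b2 t t' bl' BB by auto
        ultimately show False by simp
      qed
    qed
  qed
qed

end



lemma piece:
  assumes fP: "fp P ltP" and fQ: "fp Q ltQ"
    and X: "X \<in> parts P ltP" and Y: "Y \<in> parts Q ltQ"
    and let_eq: "letter_of P ltP X = letter_of Q ltQ Y"
    and h: "(is_clone_set P ltP X \<longrightarrow> card X = card Y) \<and> (is_tangle P ltP X \<longrightarrow> order_iso X ltP Y ltQ)"
  shows "\<exists>g. bij_betw g X Y \<and> (\<forall>x\<in>X. \<forall>y\<in>X. ltP x y \<longleftrightarrow> ltQ (g x) (g y)) \<and>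
             (\<forall>x\<in>X. level Q ltQ (g x) = level P ltP x)"
proof -
  interpret p: fp P ltP by (rule fP)
  interpret q: fp Q ltQ by (rule fQ)
  show ?thesis
  proof (cases "is_tangle P ltP X")
    case True
    then have tY: "is_tangle Q ltQ Y" and mn: "Min (level P ltP ` X) = Min (level Q ltQ ` Y)"
      using let_eq unfolding letter_of_def by (auto split: if_splits)
    from True h obtain g where g: "bij_betw g X Y" "\<forall>x\<in>X. \<forall>y\<in>X. ltP x y \<longleftrightarrow> ltQ (g x) (g y)"
      unfolding order_iso_def by blast
    note tp = p.tangle_part[OF True] and tq = q.tangle_part[OF tY]
    have "\<forall>x\<in>X. level Q ltQ (g x) = level P ltP x"
    proof
      fix x assume x: "x \<in> X"
      have gx: "g x \<in> Y" using g x bij_betwE by blast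
      have "(\<exists>y\<in>Y. ltQ y (g x)) \<longleftrightarrow> (\<exists>y\<in>X. ltP y x)"
      proof
        assume "\<exists>y\<in>Y. ltQ y (g x)"
        then obtain y where y: "y \<in> Y" "ltQ y (g x)" by blast
        then obtain y' where "y' \<in> X" "y = g y'" using g(1) by (auto simp: bij_betw_def)
        then show "\<exists>y\<in>X. ltP y x" using g(2) x y by blast
      next
        assume "\<exists>y\<in>X. ltP y x"
        then obtain y where "y \<in> X" "ltP y x" by blast
        then show "\<exists>y\<in>Y. ltQ y (g x)" using g x bij_betwE by blast
      qed
      moreover have "level P ltP x = (if \<exists>y\<in>X. ltP y x then Suc (Min (level P ltP ` X)) else Min (level P ltP ` X))"
        using tp x by blast
      moreover have "level Q ltQ (g x) = (if \<exists>y\<in>Y. ltQ y (g x) then Suc (Min (level Q ltQ ` Y)) else Min (level Q ltQ ` Y))"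
        using tq gx by blast
      ultimately show "level Q ltQ (g x) = level P ltP x" using mn by simp
    qed
    then show ?thesis using g by blast
  next
    case False
    then have cX: "is_clone_set P ltP X" using X p.parts_cases by blast
    then have "\<not> is_tangle Q ltQ Y" and mn: "Min (level P ltP ` X) = Min (level Q ltQ ` Y)"
      using let_eq False unfolding letter_of_def by (auto split: if_splits)
    then have cY: "is_clone_set Q ltQ Y" using Y q.parts_cases by blast
    have XP: "X \<subseteq> P" and lX: "\<forall>a\<in>X. level P ltP a = Min (level P ltP ` X)" and aX: "\<forall>a\<in>X. \<forall>b\<in>X. \<not> ltP a b"
      using p.clone_part[OF cX] by blast+
    have YQ: "Y \<subseteq> Q" and lY: "\<forall>a\<in>Y. level Q ltQ a = Min (level Q ltQ ` Y)" and aY: "\<forall>a\<in>Y. \<forall>b\<in>Y. \<not> ltQ a b"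
      using q.clone_part[OF cY] by blast+
    have fX: "finite X" using XP p.fin finite_subset by blast
    have fY: "finite Y" using YQ q.fin finite_subset by blast
    have "card X = card Y" using h cX by blast
    then obtain g where g: "bij_betw g X Y" using finite_same_card_bij[OF fX fY] by blast
    have gY: "\<And>x. x \<in> X \<Longrightarrow> g x \<in> Y" using g bij_betwE by blast
    have "\<forall>x\<in>X. \<forall>y\<in>X. ltP x y \<longleftrightarrow> ltQ (g x) (g y)" using aX aY gY by blast
    moreover have "\<forall>x\<in>X. level Q ltQ (g x) = level P ltP x" using lX lY gY mn by simp
    ultimately show ?thesis using g by blast
  qed
qed

lemma uniq_idx:
  assumes fP: "fp P ltP" and cl: "compatible_listing P ltP Xs" and a: "a \<in> P"
  shows "\<exists>!i. i < length Xs \<and> a \<in> Xs!i"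
proof -
  interpret p: fp P ltP by (rule fP)
  obtain X where "X \<in> parts P ltP" "a \<in> X" using p.parts_cover a by blast
  then obtain i where i: "i < length Xs" "a \<in> Xs!i" using cl unfolding compatible_listing_def
    by (metis in_set_conv_nth)
  moreover have "j < length Xs \<Longrightarrow> a \<in> Xs!j \<Longrightarrow> j = i" for j
    using p.disj[OF cl] i by blast
  ultimately show ?thesis by blast
qed

theorem corollary3p10:
  fixes P :: "'a set" and ltP :: "'a \<Rightarrow> 'a \<Rightarrow> bool"
    and Q :: "'b set" and ltQ :: "'b \<Rightarrow> 'b \<Rightarrow> bool"
    and Xs :: "'a set list" and Ys :: "'b set list"
  assumes "finite P" "strict_poset P ltP" "free_3_1 P ltP"
    and "finite Q" "strict_poset Q ltQ" "free_3_1 Q ltQ"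
    and "skeleton P ltP = skeleton Q ltQ"
    and "compatible_listing P ltP Xs" "compatible_listing Q ltQ Ys"
    and "length Xs = length Ys"
    and "word P ltP Xs = word Q ltQ Ys"
    and "\<forall>i<length Xs. (is_clone_set P ltP (Xs!i) \<longrightarrow> card (Xs!i) = card (Ys!i)) \<and>
           (is_tangle P ltP (Xs!i) \<longrightarrow> order_iso (Xs!i) ltP (Ys!i) ltQ)"
  shows "order_iso P ltP Q ltQ"
proof -
  have fP: "fp P ltP" using assms(1-3) by (simp add: fp_def)
  have fQ: "fp Q ltQ" using assms(4-6) by (simp add: fp_def)
  interpret p: fp P ltP by (rule fP)
  interpret q: fp Q ltQ by (rule fQ)
  note clP = assms(8) and clQ = assms(9)
  define n where "n = length Xs"
  have nY: "length Ys = n" using assms(10) n_def by simp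
  have "\<forall>i. \<exists>g. i < n \<longrightarrow> bij_betw g (Xs!i) (Ys!i) \<and> (\<forall>x\<in>Xs!i. \<forall>y\<in>Xs!i. ltP x y \<longleftrightarrow> ltQ (g x) (g y)) \<and>
             (\<forall>x\<in>Xs!i. level Q ltQ (g x) = level P ltP x)"
  proof
    fix i
    show "\<exists>g. i < n \<longrightarrow> bij_betw g (Xs!i) (Ys!i) \<and> (\<forall>x\<in>Xs!i. \<forall>y\<in>Xs!i. ltP x y \<longleftrightarrow> ltQ (g x) (g y)) \<and>
             (\<forall>x\<in>Xs!i. level Q ltQ (g x) = level P ltP x)"
    proof (cases "i < n")
      case True
      have X: "Xs!i \<in> parts P ltP" using clP True n_def unfolding compatible_listing_def by auto
      have Y: "Ys!i \<in> parts Q ltQ" using clQ True nY unfolding compatible_listing_def by auto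
      have "letter_of P ltP (Xs!i) = letter_of Q ltQ (Ys!i)"
        using assms(11) True n_def nY unfolding word_def by (metis nth_map)
      then show ?thesis using piece[OF fP fQ X Y] assms(12) True n_def by blast
    qed simp
  qed
  then have "\<exists>G. \<forall>i. i < n \<longrightarrow> bij_betw (G i) (Xs!i) (Ys!i) \<and> (\<forall>x\<in>Xs!i. \<forall>y\<in>Xs!i. ltP x y \<longleftrightarrow> ltQ (G i x) (G i y)) \<and>
             (\<forall>x\<in>Xs!i. level Q ltQ (G i x) = level P ltP x)" by (rule choice)
  then obtain G where G: "\<forall>i. i < n \<longrightarrow> bij_betw (G i) (Xs!i) (Ys!i) \<and> (\<forall>x\<in>Xs!i. \<forall>y\<in>Xs!i. ltP x y \<longleftrightarrow> ltQ (G i x) (G i y)) \<and>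
             (\<forall>x\<in>Xs!i. level Q ltQ (G i x) = level P ltP x)" by blast
  have Gb: "\<And>i. i < n \<Longrightarrow> bij_betw (G i) (Xs!i) (Ys!i)" using G by blast
  have Go: "\<And>i x y. i < n \<Longrightarrow> x \<in> Xs!i \<Longrightarrow> y \<in> Xs!i \<Longrightarrow> ltP x y \<longleftrightarrow> ltQ (G i x) (G i y)" using G by blast
  have Gl: "\<And>i x. i < n \<Longrightarrow> x \<in> Xs!i \<Longrightarrow> level Q ltQ (G i x) = level P ltP x" using G by blast
  have Gin: "\<And>i x. i < n \<Longrightarrow> x \<in> Xs!i \<Longrightarrow> G i x \<in> Ys!i" using Gb bij_betwE by blast
  have Ginj: "\<And>i x y. i < n \<Longrightarrow> x \<in> Xs!i \<Longrightarrow> y \<in> Xs!i \<Longrightarrow> G i x = G i y \<Longrightarrow> x = y"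
    using Gb unfolding bij_betw_def inj_on_def by blast
  have Gsurj: "\<And>i y. i < n \<Longrightarrow> y \<in> Ys!i \<Longrightarrow> \<exists>x\<in>Xs!i. y = G i x"
    using Gb unfolding bij_betw_def by blast
  have Xsub: "\<And>i. i < n \<Longrightarrow> Xs!i \<subseteq> P"
  proof -
    fix i assume "i < n"
    then have "Xs!i \<in> parts P ltP" using clP n_def unfolding compatible_listing_def by (metis nth_mem)
    then show "Xs!i \<subseteq> P" by (rule p.parts_sub)
  qed
  have Ysub: "\<And>i. i < n \<Longrightarrow> Ys!i \<subseteq> Q"
  proof -
    fix i assume "i < n"
    then have "Ys!i \<in> parts Q ltQ" using clQ nY unfolding compatible_listing_def by (metis nth_mem)
    then show "Ys!i \<subseteq> Q" by (rule q.parts_sub)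
  qed
  have U: "\<And>a. a \<in> P \<Longrightarrow> \<exists>!i. i < n \<and> a \<in> Xs!i" using uniq_idx[OF fP clP] n_def by simp
  define idx where "idx a = (THE i. i < n \<and> a \<in> Xs!i)" for a
  have idx: "a \<in> P \<Longrightarrow> idx a < n \<and> a \<in> Xs!(idx a)" for a
    unfolding idx_def using theI'[OF U] by blast
  have idx_eq: "i < n \<Longrightarrow> a \<in> Xs!i \<Longrightarrow> idx a = i" for a i
  proof -
    assume a: "i < n" "a \<in> Xs!i"
    then have "a \<in> P" using Xsub by blast
    then show "idx a = i" unfolding idx_def using the1_equality[OF U] a by blast
  qed
  define f where "f a = G (idx a) a" for a
  have fin: "a \<in> P \<Longrightarrow> f a \<in> Ys!(idx a)" for a using idx Gin unfolding f_def by blast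
  have lvf: "a \<in> P \<Longrightarrow> level Q ltQ (f a) = level P ltP a" for a using idx Gl unfolding f_def by blast
  have bij: "bij_betw f P Q"
    unfolding bij_betw_def
  proof
    show "inj_on f P"
    proof
      fix a b assume ab: "a \<in> P" "b \<in> P" "f a = f b"
      have ia: "idx a < n" "a \<in> Xs!(idx a)" using idx[OF ab(1)] by auto
      have ib: "idx b < n" "b \<in> Xs!(idx b)" using idx[OF ab(2)] by auto
      have eq: "idx a = idx b"
      proof (rule ccontr)
        assume ne: "idx a \<noteq> idx b"
        have "Ys!(idx a) \<inter> Ys!(idx b) = {}" by (rule q.disj[OF clQ]) (use ia ib nY ne in auto)
        moreover have "f a \<in> Ys!(idx a)" by (rule fin[OF ab(1)])
        moreover have "f a \<in> Ys!(idx b)" unfolding ab(3) by (rule fin[OF ab(2)])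
        ultimately show False by (simp add: disjoint_iff)
      qed
      have gg: "G (idx a) a = G (idx a) b" using ab(3) eq unfolding f_def by simp
      have "b \<in> Xs!(idx a)" using ib(2) eq by simp
      then show "a = b" using Ginj[OF ia(1) ia(2)] gg by blast
    qed
  next
    show "f ` P = Q"
    proof
      show "f ` P \<subseteq> Q"
      proof
        fix y assume "y \<in> f ` P"
        then obtain a where a: "a \<in> P" "y = f a" by blast
        have "f a \<in> Ys!(idx a)" by (rule fin[OF a(1)])
        moreover have "Ys!(idx a) \<subseteq> Q" using Ysub idx[OF a(1)] by blast
        ultimately show "y \<in> Q" using a(2) by blast
      qed
    next
      show "Q \<subseteq> f ` P"
      proof
        fix y assume y: "y \<in> Q"
        obtain Y where Y: "Y \<in> parts Q ltQ" "y \<in> Y" using q.parts_cover y by blast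
        have "set Ys = parts Q ltQ" using clQ unfolding compatible_listing_def by blast
        then have "Y \<in> set Ys" using Y by simp
        then obtain i where "i < length Ys" "Ys!i = Y" by (auto simp: in_set_conv_nth)
        then have i: "i < n" "y \<in> Ys!i" using nY Y by auto
        then obtain x where x: "x \<in> Xs!i" "y = G i x" using Gsurj by blast
        have xP: "x \<in> P" using x i Xsub by blast
        have "idx x = i" using idx_eq i x by blast
        then have "f x = y" using x f_def by simp
        then show "y \<in> f ` P" using xP by blast
      qed
    qed
  qed
  have ord: "\<forall>x\<in>P. \<forall>y\<in>P. ltP x y \<longleftrightarrow> ltQ (f x) (f y)"
  proof (intro ballI)
    fix a b assume ab: "a \<in> P" "b \<in> P"
    show "ltP a b \<longleftrightarrow> ltQ (f a) (f b)"
    proof (cases "idx a = idx b")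
      case True
      then show ?thesis using Go idx ab unfolding f_def by metis
    next
      case False
      have 1: "ltP a b \<longleftrightarrow> (level P ltP a + 2 \<le> level P ltP b \<or> (level P ltP a + 1 = level P ltP b \<and> idx a < idx b))"
        using clP idx[OF ab(1)] idx[OF ab(2)] False n_def unfolding compatible_listing_def by blast
      have 2: "ltQ (f a) (f b) \<longleftrightarrow> (level Q ltQ (f a) + 2 \<le> level Q ltQ (f b) \<or> (level Q ltQ (f a) + 1 = level Q ltQ (f b) \<and> idx a < idx b))"
        using clQ idx[OF ab(1)] idx[OF ab(2)] fin[OF ab(1)] fin[OF ab(2)] False nY unfolding compatible_listing_def by blast
      show ?thesis using 1 2 lvf ab by simp
    qed
  qed
  show ?thesis unfolding order_iso_def using bij ord by blast
qed


end
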